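(* In the Schwarzschild spacetime with line element $$ds^2=-\left(1-\frac{2m}{r}\right)dt^2+\left(1-\frac{2m}{r}\right)^{-1}dr^2+r^2\left(d\theta^2+\sin^2\theta\, d\varphi^2\right)$$ ($m>0$, $r>2m$, $0<\theta<\pi$), consider a test particle on an equatorial circular geodesic orbit of radius $r_1>3m$, with 4-velocity $$U'=\left(\sqrt{\frac{r_1}{r_1-3m}},\,0,\,0,\,\frac{1}{r_1}\sqrt{\frac{m}{r_1-3m}}\right)$$ in coordinates $(t,r,\theta,\varphi)$. Let $\beta$ be any stationary observer (constant $r,\theta,\varphi$) with 4-velocity field $U=\left(1-\frac{2m}{r}\right)^{-1/2}\frac{\partial}{\partial t}$. For any event $p$ of $\beta$ and any event $q$ of the test particle joined to $p$ by a spacelike geodesic segment orthogonal to $U_p$ at $p$, the kinematic relative velocity $v_{\mathrm{kin}}$ of $U'_q$ with respect to $U_p$ satisfies $$\|v_{\mathrm{kin}}\|^2=\frac{m}{r_1-2m};$$ in particular, it is constant along $\beta$ and independent of the chosen stationary observer.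
   Context: Signature $(-,+,+,+)$, $c=1$; for spacelike $x$, $\|x\|=g(x,x)^{1/2}$. Given an observer $u$ (future-pointing unit timelike vector) at $p$, a test particle with 4-velocity $u'$ at $q$, and a spacelike geodesic segment $\psi$ from $p$ to $q$ orthogonal to $u$ at $p$, let $\tau_{qp}$ be parallel transport from $q$ to $p$ along $\psi$. The kinematic relative velocity of $u'$ with respect to $u$ is $v_{\mathrm{kin}}=\frac{1}{-g(\tau_{qp}u',u)}\tau_{qp}u'-u$. *)

theory Defs
  imports "HOL-Analysis.Analysis"
begin

text \<open>Events of the Schwarzschild exterior are represented in the global
Cartesian chart (t, x, y, z), indices 0,1,2,3 of type 4, with spatial radius
r = |(x,y,z)| > 2m.  In this chart the Schwarzschild line element reads
 ds^2 = -(1 - 2m/r) dt^2 + dx.dx + 2m/(r - 2m) (x.dx)^2 / r^2 ,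
which is the pull-back of the paper's line element under the usual
spherical-to-Cartesian map sph below.\<close>

definition srad :: "real^4 \<Rightarrow> real" where
  "srad p = sqrt ((p$1)^2 + (p$2)^2 + (p$3)^2)"

definition schw_exterior :: "real \<Rightarrow> (real^4) set" where
  "schw_exterior m = {p. srad p > 2*m}"

definition schw_metric :: "real \<Rightarrow> real^4 \<Rightarrow> real^4^4" where
  "schw_metric m p = (\<chi> a b.
     if a = 0 \<and> b = 0 then - (1 - 2*m / srad p)
     else if a = 0 \<or> b = 0 then 0
     else (if a = b then 1 else 0) + 2*m / (srad p - 2*m) * (p$a * p$b) / (srad p)^2)"

definition sg :: "real \<Rightarrow> real^4 \<Rightarrow> real^4 \<Rightarrow> real^4 \<Rightarrow> real" where
  "sg m p v w = v \<bullet> (schw_metric m p *v w)"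

definition pdiff :: "(real^4 \<Rightarrow> real) \<Rightarrow> 4 \<Rightarrow> real^4 \<Rightarrow> real" where
  "pdiff f b p = deriv (\<lambda>s. f (p + s *\<^sub>R axis b 1)) 0"

definition christoffel :: "real \<Rightarrow> real^4 \<Rightarrow> 4 \<Rightarrow> 4 \<Rightarrow> 4 \<Rightarrow> real" where
  "christoffel m p a b c = (1/2) * (\<Sum>d\<in>UNIV. matrix_inv (schw_metric m p) $ a $ d *
      (pdiff (\<lambda>x. schw_metric m x $ d $ c) b p + pdiff (\<lambda>x. schw_metric m x $ d $ b) c p
       - pdiff (\<lambda>x. schw_metric m x $ b $ c) d p))"

definition geodesic_segment :: "real \<Rightarrow> (real \<Rightarrow> real^4) \<Rightarrow> bool" where
  "geodesic_segment m \<gamma> \<longleftrightarrow> (\<forall>s\<in>{0..1}. \<gamma> s \<in> schw_exterior m) \<and>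
     (\<exists>\<gamma>' \<gamma>''. \<forall>s\<in>{0..1}. (\<gamma> has_vector_derivative \<gamma>' s) (at s within {0..1}) \<and>
        (\<gamma>' has_vector_derivative \<gamma>'' s) (at s within {0..1}) \<and>
        (\<forall>a. \<gamma>'' s $ a + (\<Sum>b\<in>UNIV. \<Sum>c\<in>UNIV. christoffel m (\<gamma> s) a b c * \<gamma>' s $ b * \<gamma>' s $ c) = 0))"

definition parallel_along :: "real \<Rightarrow> (real \<Rightarrow> real^4) \<Rightarrow> (real \<Rightarrow> real^4) \<Rightarrow> bool" where
  "parallel_along m \<gamma> V \<longleftrightarrow> (\<exists>V'. \<forall>s\<in>{0..1}. (V has_vector_derivative V' s) (at s within {0..1}) \<and>
        (\<forall>a. V' s $ a + (\<Sum>b\<in>UNIV. \<Sum>c\<in>UNIV. christoffel m (\<gamma> s) a b c *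
              vector_derivative \<gamma> (at s within {0..1}) $ b * V s $ c) = 0))"

definition sph :: "real^4 \<Rightarrow> real^4" where
  "sph y = (\<chi> i. if i = 0 then y$0
                 else if i = 1 then y$1 * sin (y$2) * cos (y$3)
                 else if i = 2 then y$1 * sin (y$2) * sin (y$3)
                 else y$1 * cos (y$2))"

definition vec4 :: "real \<Rightarrow> real \<Rightarrow> real \<Rightarrow> real \<Rightarrow> real^4" where
  "vec4 a b c d = (\<chi> i. if i = 0 then a else if i = 1 then b else if i = 2 then c else d)"

definition sph_push :: "real^4 \<Rightarrow> real^4 \<Rightarrow> real^4" where
  "sph_push y v = vector_derivative (\<lambda>s. sph (y + s *\<^sub>R v)) (at 0)"

definition obs_event :: "real \<Rightarrow> real \<Rightarrow> real \<Rightarrow> real \<Rightarrow> real^4" where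
  "obs_event t0 r0 th0 ph0 = sph (vec4 t0 r0 th0 ph0)"

definition obs_vel :: "real \<Rightarrow> real \<Rightarrow> real \<Rightarrow> real \<Rightarrow> real \<Rightarrow> real^4" where
  "obs_vel m t0 r0 th0 ph0 = sph_push (vec4 t0 r0 th0 ph0)
      (vec4 (1 / sqrt (1 - 2*m/r0)) 0 0 0)"

definition orb_ut :: "real \<Rightarrow> real \<Rightarrow> real" where
  "orb_ut m r1 = sqrt (r1 / (r1 - 3*m))"

definition orb_uphi :: "real \<Rightarrow> real \<Rightarrow> real" where
  "orb_uphi m r1 = (1 / r1) * sqrt (m / (r1 - 3*m))"

text \<open>Event of the particle at coordinate time t1; ph1 is the phase at t = 0.\<close>
definition orb_event :: "real \<Rightarrow> real \<Rightarrow> real \<Rightarrow> real \<Rightarrow> real^4" where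
  "orb_event m r1 ph1 t1 =
     sph (vec4 t1 r1 (pi/2) (ph1 + orb_uphi m r1 / orb_ut m r1 * t1))"

definition orb_vel :: "real \<Rightarrow> real \<Rightarrow> real \<Rightarrow> real \<Rightarrow> real^4" where
  "orb_vel m r1 ph1 t1 =
     sph_push (vec4 t1 r1 (pi/2) (ph1 + orb_uphi m r1 / orb_ut m r1 * t1))
       (vec4 (orb_ut m r1) 0 0 (orb_uphi m r1))"

text \<open>Kinematic relative velocity of (the transported) u' with respect to u, at p.\<close>
definition vkin :: "real \<Rightarrow> real^4 \<Rightarrow> real^4 \<Rightarrow> real^4 \<Rightarrow> real^4" where
  "vkin m p u tu' = (1 / (- sg m p tu' u)) *\<^sub>R tu' - u"

end

theory Submission
  imports Defs
begin


lemma four0: "(4::4) = 0" by simp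
lemma ex4: "(x::4) = 0 \<or> x = 1 \<or> x = 2 \<or> x = 3"
proof -
  have "x = 1 \<or> x = 2 \<or> x = 3 \<or> x = 4" by (rule exhaust_4)
  then show ?thesis unfolding four0 by blast
qed
lemma UNIV4: "(UNIV::4 set) = {0,1,2,3}"
  using ex4 by blast
lemma d4: "(0::4) \<noteq> 1" "(0::4) \<noteq> 2" "(0::4) \<noteq> 3" "(1::4) \<noteq> 2" "(1::4) \<noteq> 3" "(2::4) \<noteq> 3"
  by simp_all
lemma sum4: "sum f (UNIV::4 set) = f 0 + f 1 + f 2 + f 3"
  unfolding UNIV4 using d4 by (simp add: add.assoc)
lemma forall4: "(\<forall>i::4. P i) \<longleftrightarrow> P 0 \<and> P 1 \<and> P 2 \<and> P 3"
  using ex4 by metis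
lemma srad_sq: "(srad p)^2 = (p$1)^2 + (p$2)^2 + (p$3)^2"
  unfolding srad_def by simp
definition ginvE :: "real \<Rightarrow> real^4 \<Rightarrow> real^4^4" where
  "ginvE m p = (\<chi> a b.
     if a = 0 \<and> b = 0 then - 1 / (1 - 2*m / srad p)
     else if a = 0 \<or> b = 0 then 0
     else (if a = b then 1 else 0) - 2*m / srad p * (p$a * p$b) / (srad p)^2)"

lemma inv_prod:
  assumes "srad p > 2*m" "m > 0"
  shows "schw_metric m p ** ginvE m p = mat 1 \<and> ginvE m p ** schw_metric m p = mat 1"
proof -
  define r where "r = srad p"
  have r2: "r^2 = (p$1)^2 + (p$2)^2 + (p$3)^2" using srad_sq r_def by simp
  have rp: "r > 2*m" using assms r_def by simp
  have rm: "r - 2*m \<noteq> 0" "r \<noteq> 0" using rp assms by auto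
  define u where "u = 2*m / (r - 2*m) / r^2"
  define v where "v = 2*m / r / r^2"
  define N where "N = 1 - 2*m/r"
  have N: "N \<noteq> 0"
  proof -
    have "N = (r - 2*m) / r" unfolding N_def using rm by (simp add: field_simps)
    then show ?thesis using rm by simp
  qed
  have huv: "u - v = u * v * ((p$1)^2 + (p$2)^2 + (p$3)^2)"
    unfolding u_def v_def r2[symmetric] using rm by (simp add: field_simps power2_eq_square)
  have g: "schw_metric m p = (\<chi> a b. if a = 0 \<and> b = 0 then - N
     else if a = 0 \<or> b = 0 then 0 else (if a = b then 1 else 0) + u * (p$a * p$b))"
    unfolding schw_metric_def u_def N_def r_def by (simp add: vec_eq_iff)
  have gi: "ginvE m p = (\<chi> a b. if a = 0 \<and> b = 0 then - 1 / N
     else if a = 0 \<or> b = 0 then 0 else (if a = b then 1 else 0) - v * (p$a * p$b))"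
    unfolding ginvE_def v_def N_def r_def by (simp add: vec_eq_iff)
  show ?thesis
    unfolding matrix_matrix_mult_def mat_def g gi
    apply (simp add: vec_eq_iff sum4 forall4 N d4)
    apply (intro conjI)
    apply (use huv in algebra)+
    done
qed


lemma nth_diff[simp]: "(\<lambda>x::real^4. x $ i) differentiable F"
  using bounded_linear_vec_nth[of i] bounded_linear_imp_differentiable by blast
lemma srad_differentiable: "srad p > 0 \<Longrightarrow> srad differentiable (at p)"
proof -
  assume "srad p > 0"
  then have pos: "(p$1)^2 + (p$2)^2 + (p$3)^2 > 0" unfolding srad_def by simp
  have "(\<lambda>x::real^4. (x$1)^2 + (x$2)^2 + (x$3)^2) differentiable (at p)" by simp
  then obtain D where "((\<lambda>x::real^4. (x$1)^2 + (x$2)^2 + (x$3)^2) has_derivative D) (at p)"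
    unfolding differentiable_def by blast
  from has_derivative_real_sqrt[OF pos this] show ?thesis
    unfolding srad_def differentiable_def by blast
qed
lemma metric_differentiable:
  assumes "srad p > 2*m" "m > 0"
  shows "(\<lambda>x. schw_metric m x $ a $ b) differentiable (at p)"
proof -
  have s: "srad differentiable (at p)" using assms by (intro srad_differentiable) simp
  have n: "srad p \<noteq> 0" "srad p - 2*m \<noteq> 0" using assms by auto
  consider "a = 0 \<and> b = 0" | "\<not>(a = 0 \<and> b = 0) \<and> (a = 0 \<or> b = 0)" | "a \<noteq> 0 \<and> b \<noteq> 0" by blast
  then show ?thesis
  proof cases
    case 1
    then have "(\<lambda>x. schw_metric m x $ a $ b) = (\<lambda>x. - (1 - 2*m / srad x))"
      unfolding schw_metric_def by auto
    then show ?thesis using s n by simp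
  next
    case 2
    then have "(\<lambda>x. schw_metric m x $ a $ b) = (\<lambda>x. 0)"
      unfolding schw_metric_def by auto
    then show ?thesis by simp
  next
    case 3
    then have "(\<lambda>x. schw_metric m x $ a $ b) = (\<lambda>x. (if a = b then 1 else 0) + 2*m / (srad x - 2*m) * (x$a * x$b) / (srad x)^2)"
      unfolding schw_metric_def by auto
    then show ?thesis using s n by simp
  qed
qed


lemma pdiff_frechet:
  fixes f :: "real^4 \<Rightarrow> real"
  assumes "f differentiable (at p)"
  shows "pdiff f b p = frechet_derivative f (at p) (axis b 1)"
proof -
  let ?D = "frechet_derivative f (at p)"
  have fd: "(f has_derivative ?D) (at p)" using assms frechet_derivative_works by blast
  have lin: "linear ?D" using fd has_derivative_linear by blast
  have h: "((\<lambda>s::real. p + s *\<^sub>R axis b 1) has_derivative (\<lambda>s. s *\<^sub>R axis b 1)) (at 0)"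
    by (auto intro!: derivative_eq_intros)
  have fd': "(f has_derivative ?D) (at ((\<lambda>s::real. p + s *\<^sub>R axis b 1) 0))" using fd by simp
  have "((\<lambda>s. f (p + s *\<^sub>R axis b 1)) has_derivative (\<lambda>s. ?D (s *\<^sub>R axis b 1))) (at 0)"
    using has_derivative_compose[OF h fd'] by (simp add: o_def)
  then have "((\<lambda>s. f (p + s *\<^sub>R axis b 1)) has_real_derivative ?D (axis b 1)) (at 0)"
    by (rule has_derivative_imp_has_field_derivative) (simp add: linear_scale[OF lin] mult.commute)
  then show ?thesis unfolding pdiff_def by (rule DERIV_imp_deriv)
qed

lemma chain_pdiff:
  fixes f :: "real^4 \<Rightarrow> real"
  assumes "f differentiable (at (\<psi> s))" "(\<psi> has_vector_derivative d) (at s within S)"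
  shows "((\<lambda>s. f (\<psi> s)) has_real_derivative (\<Sum>c\<in>UNIV. pdiff f c (\<psi> s) * d $ c)) (at s within S)"
proof -
  let ?D = "frechet_derivative f (at (\<psi> s))"
  have fd: "(f has_derivative ?D) (at (\<psi> s))" using assms frechet_derivative_works by blast
  have lin: "linear ?D" using fd has_derivative_linear by blast
  have h: "(\<psi> has_derivative (\<lambda>t. t *\<^sub>R d)) (at s within S)"
    using assms(2) by (simp add: has_vector_derivative_def)
  have "((\<lambda>s. f (\<psi> s)) has_derivative (\<lambda>t. ?D (t *\<^sub>R d))) (at s within S)"
    using has_derivative_compose[OF h fd] by (simp add: o_def)
  moreover have "?D d = (\<Sum>c\<in>UNIV. pdiff f c (\<psi> s) * d $ c)"
  proof -
    have "?D d = ?D (\<Sum>c\<in>UNIV. d$c *\<^sub>R axis c 1)"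
      using basis_expansion[of d] by (simp add: scalar_mult_eq_scaleR)
    also have "\<dots> = (\<Sum>c\<in>UNIV. d$c * ?D (axis c 1))"
      using lin by (simp add: linear_sum linear_scale)
    finally show ?thesis using pdiff_frechet[OF assms(1)] by (simp add: mult.commute)
  qed
  ultimately show ?thesis
    by (intro has_derivative_imp_has_field_derivative) (auto simp: linear_scale[OF lin] mult.commute)
qed


lemma swap3: "(\<Sum>a\<in>A. \<Sum>b\<in>B. \<Sum>c\<in>C. f a b c) = (\<Sum>b\<in>B. \<Sum>c\<in>C. \<Sum>a\<in>A. f a b c)"
  by (subst sum.swap) (rule sum.cong[OF refl], rule sum.swap)
lemma swap23: "(\<Sum>a\<in>A. \<Sum>b\<in>B. \<Sum>c\<in>C. f a b c) = (\<Sum>a\<in>A. \<Sum>c\<in>C. \<Sum>b\<in>B. f a b c)"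
  by (rule sum.cong[OF refl], rule sum.swap)
lemma compat_alg:
  fixes g :: "'n::finite \<Rightarrow> 'n \<Rightarrow> real" and dg Gam :: "'n \<Rightarrow> 'n \<Rightarrow> 'n \<Rightarrow> real"
    and X V W :: "'n \<Rightarrow> real"
  assumes sym: "\<And>a b. g a b = g b a"
    and dsym: "\<And>c a b. dg c a b = dg c b a"
    and low: "\<And>d b c. (\<Sum>a\<in>UNIV. g d a * Gam a b c) = (1/2) * (dg b d c + dg c d b - dg d b c)"
    and W: "\<And>a. W a = - (\<Sum>b\<in>UNIV. \<Sum>c\<in>UNIV. Gam a b c * X b * V c)"
  shows "(\<Sum>a\<in>UNIV. \<Sum>b\<in>UNIV. W a * g a b * V b + V a * (\<Sum>c\<in>UNIV. dg c a b * X c) * V b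
            + V a * g a b * W b) = 0"
proof -
  have gW: "(\<Sum>a\<in>UNIV. g b a * W a) =
      - (1/2) * (\<Sum>e\<in>UNIV. \<Sum>c\<in>UNIV. (dg e b c + dg c b e - dg b e c) * X e * V c)" for b
  proof -
    have "(\<Sum>a\<in>UNIV. g b a * W a) = - (\<Sum>a\<in>UNIV. \<Sum>e\<in>UNIV. \<Sum>c\<in>UNIV. g b a * Gam a e c * X e * V c)"
      unfolding W by (simp add: sum_distrib_left sum_negf mult.assoc)
    also have "\<dots> = - (\<Sum>e\<in>UNIV. \<Sum>c\<in>UNIV. \<Sum>a\<in>UNIV. g b a * Gam a e c * X e * V c)"
      by (subst swap3) (rule refl)
    also have "\<dots> = - (\<Sum>e\<in>UNIV. \<Sum>c\<in>UNIV. (\<Sum>a\<in>UNIV. g b a * Gam a e c) * X e * V c)"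
      by (simp add: sum_distrib_right)
    also have "\<dots> = - (1/2) * (\<Sum>e\<in>UNIV. \<Sum>c\<in>UNIV. (dg e b c + dg c b e - dg b e c) * X e * V c)"
      unfolding low by (simp add: sum_distrib_left mult.assoc sum_negf)
    finally show ?thesis .
  qed
  define F where "F b e c = dg e b c * X e * V c * V b" for b e c
  define G where "G b e c = dg c b e * X e * V c * V b" for b e c
  define H where "H b e c = dg b e c * X e * V c * V b" for b e c
  have S1: "(\<Sum>a\<in>UNIV. \<Sum>b\<in>UNIV. W a * g a b * V b) =
      - (1/2) * (\<Sum>b\<in>UNIV. \<Sum>e\<in>UNIV. \<Sum>c\<in>UNIV. F b e c + G b e c - H b e c)"
  proof -
    have "(\<Sum>a\<in>UNIV. \<Sum>b\<in>UNIV. W a * g a b * V b) = (\<Sum>b\<in>UNIV. V b * (\<Sum>a\<in>UNIV. g b a * W a))"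
      by (subst sum.swap) (simp add: sum_distrib_left sym mult.commute mult.left_commute)
    also have "\<dots> = - (1/2) * (\<Sum>b\<in>UNIV. \<Sum>e\<in>UNIV. \<Sum>c\<in>UNIV. F b e c + G b e c - H b e c)"
      unfolding gW F_def G_def H_def
      by (simp add: sum_distrib_left algebra_simps sum_negf)
    finally show ?thesis .
  qed
  have S3: "(\<Sum>a\<in>UNIV. \<Sum>b\<in>UNIV. V a * g a b * W b) = (\<Sum>a\<in>UNIV. \<Sum>b\<in>UNIV. W a * g a b * V b)"
    by (subst sum.swap) (simp add: sym mult.commute mult.left_commute)
  have S2: "(\<Sum>a\<in>UNIV. \<Sum>b\<in>UNIV. V a * (\<Sum>c\<in>UNIV. dg c a b * X c) * V b) =
      (\<Sum>b\<in>UNIV. \<Sum>e\<in>UNIV. \<Sum>c\<in>UNIV. F b e c)"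
  proof -
    have "(\<Sum>a\<in>UNIV. \<Sum>b\<in>UNIV. V a * (\<Sum>c\<in>UNIV. dg c a b * X c) * V b) =
        (\<Sum>a\<in>UNIV. \<Sum>b\<in>UNIV. \<Sum>c\<in>UNIV. dg c a b * X c * V b * V a)"
      by (simp add: sum_distrib_left sum_distrib_right mult.commute mult.left_commute)
    also have "\<dots> = (\<Sum>a\<in>UNIV. \<Sum>c\<in>UNIV. \<Sum>b\<in>UNIV. dg c a b * X c * V b * V a)"
      by (rule swap23)
    finally show ?thesis unfolding F_def by simp
  qed
  have GH: "(\<Sum>b\<in>UNIV. \<Sum>e\<in>UNIV. \<Sum>c\<in>UNIV. G b e c) = (\<Sum>b\<in>UNIV. \<Sum>e\<in>UNIV. \<Sum>c\<in>UNIV. H b e c)"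
  proof -
    have "(\<Sum>b\<in>UNIV. \<Sum>e\<in>UNIV. \<Sum>c\<in>UNIV. H b e c) = (\<Sum>b\<in>UNIV. \<Sum>c\<in>UNIV. \<Sum>e\<in>UNIV. H b e c)"
      by (rule swap23)
    also have "\<dots> = (\<Sum>c\<in>UNIV. \<Sum>b\<in>UNIV. \<Sum>e\<in>UNIV. H b e c)"
      by (rule sum.swap)
    also have "\<dots> = (\<Sum>c\<in>UNIV. \<Sum>b\<in>UNIV. \<Sum>e\<in>UNIV. G c e b)"
      unfolding H_def G_def by (simp add: dsym mult.commute mult.left_commute)
    also have "\<dots> = (\<Sum>b\<in>UNIV. \<Sum>e\<in>UNIV. \<Sum>c\<in>UNIV. G b e c)"
      by (rule swap23)
    finally show ?thesis by simp
  qed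
  have "(\<Sum>a\<in>UNIV. \<Sum>b\<in>UNIV. W a * g a b * V b + V a * (\<Sum>c\<in>UNIV. dg c a b * X c) * V b
            + V a * g a b * W b) = 2 * (\<Sum>a\<in>UNIV. \<Sum>b\<in>UNIV. W a * g a b * V b)
         + (\<Sum>a\<in>UNIV. \<Sum>b\<in>UNIV. V a * (\<Sum>c\<in>UNIV. dg c a b * X c) * V b)"
    using S3 by (simp add: sum.distrib)
  also have "\<dots> = 0"
    unfolding S1 S2 using GH by (simp add: sum.distrib sum_subtractf)
  finally show ?thesis .
qed


lemma comp_deriv:
  assumes "(V has_vector_derivative D) F"
  shows "((\<lambda>s. V s $ a) has_real_derivative D $ a) F"
proof -
  have "(V has_derivative (\<lambda>t. t *\<^sub>R D)) F" using assms by (simp add: has_vector_derivative_def)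
  from bounded_linear.has_derivative[OF bounded_linear_vec_nth[of a] this]
  have "((\<lambda>s. V s $ a) has_derivative (\<lambda>t. (t *\<^sub>R D) $ a)) F" .
  then show ?thesis by (rule has_derivative_imp_has_field_derivative) simp
qed

lemma minv:
  assumes "srad p > 2*m" "m > 0"
  shows "matrix_inv (schw_metric m p) = ginvE m p"
proof -
  have P: "schw_metric m p ** ginvE m p = mat 1 \<and> ginvE m p ** schw_metric m p = mat 1"
    using inv_prod[OF assms] .
  show ?thesis unfolding matrix_inv_def
  proof (rule some_equality)
    show "schw_metric m p ** ginvE m p = mat 1 \<and> ginvE m p ** schw_metric m p = mat 1" by (rule P)
  next
    fix A' assume A: "schw_metric m p ** A' = mat 1 \<and> A' ** schw_metric m p = mat 1"
    have "A' = A' ** (schw_metric m p ** ginvE m p)" using P by simp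
    also have "\<dots> = (A' ** schw_metric m p) ** ginvE m p" by (simp add: matrix_mul_assoc)
    also have "\<dots> = ginvE m p" using A by simp
    finally show "A' = ginvE m p" .
  qed
qed

lemma gsym: "schw_metric m p $ a $ b = schw_metric m p $ b $ a"
  unfolding schw_metric_def by (auto simp: mult.commute)

lemma dgsym: "pdiff (\<lambda>x. schw_metric m x $ a $ b) c p = pdiff (\<lambda>x. schw_metric m x $ b $ a) c p"
  using gsym[of m _ a b] by simp

lemma low:
  assumes "srad p > 2*m" "m > 0"
  shows "(\<Sum>a\<in>UNIV. schw_metric m p $ d $ a * christoffel m p a b c) =
     (1/2) * (pdiff (\<lambda>x. schw_metric m x $ d $ c) b p + pdiff (\<lambda>x. schw_metric m x $ d $ b) c p
              - pdiff (\<lambda>x. schw_metric m x $ b $ c) d p)"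
proof -
  let ?g = "schw_metric m p" and ?gi = "ginvE m p"
  define T where "T e = pdiff (\<lambda>x. schw_metric m x $ e $ c) b p + pdiff (\<lambda>x. schw_metric m x $ e $ b) c p
       - pdiff (\<lambda>x. schw_metric m x $ b $ c) e p" for e
  have I: "(\<Sum>a\<in>UNIV. ?g $ d $ a * ?gi $ a $ e) = (if d = e then 1 else 0)" for e
  proof -
    have "(?g ** ?gi) $ d $ e = (\<Sum>a\<in>UNIV. ?g $ d $ a * ?gi $ a $ e)"
      by (simp add: matrix_matrix_mult_def)
    then show ?thesis using inv_prod[OF assms] by (simp add: mat_def)
  qed
  have "(\<Sum>a\<in>UNIV. ?g $ d $ a * christoffel m p a b c) =
      (\<Sum>a\<in>UNIV. \<Sum>e\<in>UNIV. (1/2) * (?g $ d $ a * ?gi $ a $ e * T e))"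
    unfolding christoffel_def minv[OF assms] T_def by (simp add: sum_distrib_left mult.assoc)
  also have "\<dots> = (\<Sum>e\<in>UNIV. (1/2) * ((\<Sum>a\<in>UNIV. ?g $ d $ a * ?gi $ a $ e) * T e))"
    by (subst sum.swap) (simp add: sum_distrib_left sum_distrib_right mult.assoc)
  also have "\<dots> = (1/2) * T d"
  proof -
    have "(\<Sum>e\<in>UNIV. (1/2) * ((\<Sum>a\<in>UNIV. ?g $ d $ a * ?gi $ a $ e) * T e)) =
       (\<Sum>e\<in>UNIV. if d = e then (1/2) * T e else 0)"
      unfolding I by (rule sum.cong) auto
    then show ?thesis by simp
  qed
  finally show ?thesis unfolding T_def by simp
qed


lemma sg_expand: "sg m p v w = (\<Sum>a\<in>UNIV. \<Sum>b\<in>UNIV. v$a * schw_metric m p $ a $ b * w$b)"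
  unfolding sg_def inner_vec_def matrix_vector_mult_def
  by (simp add: sum_distrib_left mult.assoc)

lemma conserved:
  assumes m: "m > 0" and ext: "\<forall>s\<in>{0..1}. srad (\<psi> s) > 2*m"
    and X: "\<forall>s\<in>{0..1}. (\<psi> has_vector_derivative X s) (at s within {0..1})"
    and par: "parallel_along m \<psi> V"
  shows "sg m (\<psi> 0) (V 0) (V 0) = sg m (\<psi> 1) (V 1) (V 1)"
proof -
  obtain V' where hV: "\<forall>s\<in>{0..1}. (V has_vector_derivative V' s) (at s within {0..1}) \<and>
        (\<forall>a. V' s $ a + (\<Sum>b\<in>UNIV. \<Sum>c\<in>UNIV. christoffel m (\<psi> s) a b c *
              vector_derivative \<psi> (at s within {0..1}) $ b * V s $ c) = 0)"
    using par unfolding parallel_along_def by blast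
  define Q where "Q s = (\<Sum>a\<in>UNIV. \<Sum>b\<in>UNIV. V s $ a * schw_metric m (\<psi> s) $ a $ b * V s $ b)" for s
  have D0: "(Q has_derivative (\<lambda>h. 0)) (at s within {0..1})" if s: "s \<in> {0..1}" for s
  proof -
    have vd: "vector_derivative \<psi> (at s within {0..1}) = X s"
      using X s by (intro vector_derivative_within_closed_interval) auto
    have hVs: "(V has_vector_derivative V' s) (at s within {0..1})" using hV s by blast
    have W: "V' s $ a = - (\<Sum>b\<in>UNIV. \<Sum>c\<in>UNIV. christoffel m (\<psi> s) a b c * X s $ b * V s $ c)" for a
    proof -
      have "V' s $ a + (\<Sum>b\<in>UNIV. \<Sum>c\<in>UNIV. christoffel m (\<psi> s) a b c * X s $ b * V s $ c) = 0"
      proof -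
        have h1: "\<forall>a. V' s $ a + (\<Sum>b\<in>UNIV. \<Sum>c\<in>UNIV. christoffel m (\<psi> s) a b c *
              vector_derivative \<psi> (at s within {0..1}) $ b * V s $ c) = 0" using hV s by blast
        show ?thesis using h1[rule_format, of a] unfolding vd .
      qed
      then show ?thesis by (simp add: eq_neg_iff_add_eq_0)
    qed
    have Va: "((\<lambda>s. V s $ a) has_real_derivative V' s $ a) (at s within {0..1})" for a
      using comp_deriv[OF hVs] .
    have ga: "((\<lambda>s. schw_metric m (\<psi> s) $ a $ b) has_real_derivative
        (\<Sum>c\<in>UNIV. pdiff (\<lambda>x. schw_metric m x $ a $ b) c (\<psi> s) * X s $ c)) (at s within {0..1})" for a b
      using chain_pdiff[OF metric_differentiable[OF _ m] ] X s ext by auto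
    have trm: "((\<lambda>s. V s $ a * schw_metric m (\<psi> s) $ a $ b * V s $ b) has_real_derivative
       V' s $ a * schw_metric m (\<psi> s) $ a $ b * V s $ b +
       V s $ a * (\<Sum>c\<in>UNIV. pdiff (\<lambda>x. schw_metric m x $ a $ b) c (\<psi> s) * X s $ c) * V s $ b +
       V s $ a * schw_metric m (\<psi> s) $ a $ b * V' s $ b) (at s within {0..1})" for a b
      by (rule DERIV_cong[OF DERIV_mult[OF DERIV_mult[OF Va ga] Va]]) (simp add: algebra_simps)
    have "(Q has_real_derivative (\<Sum>a\<in>UNIV. \<Sum>b\<in>UNIV.
       V' s $ a * schw_metric m (\<psi> s) $ a $ b * V s $ b +
       V s $ a * (\<Sum>c\<in>UNIV. pdiff (\<lambda>x. schw_metric m x $ a $ b) c (\<psi> s) * X s $ c) * V s $ b +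
       V s $ a * schw_metric m (\<psi> s) $ a $ b * V' s $ b)) (at s within {0..1})"
      unfolding Q_def by (intro DERIV_sum trm)
    moreover have "(\<Sum>a\<in>UNIV. \<Sum>b\<in>UNIV.
       V' s $ a * schw_metric m (\<psi> s) $ a $ b * V s $ b +
       V s $ a * (\<Sum>c\<in>UNIV. pdiff (\<lambda>x. schw_metric m x $ a $ b) c (\<psi> s) * X s $ c) * V s $ b +
       V s $ a * schw_metric m (\<psi> s) $ a $ b * V' s $ b) = 0"
      apply (rule compat_alg[where Gam = "\<lambda>a b c. christoffel m (\<psi> s) a b c" and X = "\<lambda>i. X s $ i"])
         apply (rule gsym)
        apply (rule dgsym)
       apply (rule low) using ext s m apply auto[2]
      apply (rule W)
      done
    ultimately have "(Q has_real_derivative 0) (at s within {0..1})" by simp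
    moreover have e: "((*) (0::real)) = (\<lambda>h. 0)" by auto
    ultimately show ?thesis by (simp only: has_field_derivative_def e)
  qed
  obtain c where "\<forall>x\<in>{0..1::real}. Q x = c"
    using has_derivative_zero_constant[of "{0..1::real}" Q] D0 by auto
  then have "Q 0 = Q 1" by auto
  then show ?thesis unfolding Q_def sg_expand .
qed


lemma d4': "(1::4) \<noteq> 0" "(2::4) \<noteq> 0" "(3::4) \<noteq> 0" "(2::4) \<noteq> 1" "(3::4) \<noteq> 1" "(3::4) \<noteq> 2"
  using d4 by metis+

lemma neg_inv: "-(1/(a - b::real)) = 1/(b - a)"
  by (metis minus_diff_eq divide_minus_right)

lemma shift0: "schw_metric m (p + s *\<^sub>R axis 0 1) = schw_metric m p"
proof -
  have sr: "srad (p + s *\<^sub>R axis 0 1) = srad p"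
    unfolding srad_def by (simp add: axis_def d4')
  show ?thesis unfolding schw_metric_def sr
    by (simp add: vec_eq_iff axis_def)
qed

lemma pdiff_t: "pdiff (\<lambda>x. schw_metric m x $ a $ b) 0 p = 0"
  unfolding pdiff_def shift0 by simp

lemma g0c: "c \<noteq> 0 \<Longrightarrow> (\<lambda>x. schw_metric m x $ 0 $ c) = (\<lambda>x. 0)"
  unfolding schw_metric_def by auto

lemma pdiff_0c: "c \<noteq> 0 \<Longrightarrow> pdiff (\<lambda>x. schw_metric m x $ 0 $ c) b p = 0"
  unfolding pdiff_def g0c by simp

lemma g00: "schw_metric m p $ 0 $ 0 = - (1 - 2*m / srad p)"
  unfolding schw_metric_def by simp

lemma g00_ne: "srad p > 2*m \<Longrightarrow> m > 0 \<Longrightarrow> schw_metric m p $ 0 $ 0 < 0"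
  unfolding g00 by (simp add: field_simps)

lemma chr0:
  assumes "srad p > 2*m" "m > 0"
  shows "christoffel m p 0 b c =
     ((if b = 0 then pdiff (\<lambda>x. schw_metric m x $ 0 $ 0) c p else 0) +
      (if c = 0 then pdiff (\<lambda>x. schw_metric m x $ 0 $ 0) b p else 0)) / (2 * schw_metric m p $ 0 $ 0)"
proof -
  have gi: "ginvE m p $ 0 $ d = (if d = 0 then 1 / schw_metric m p $ 0 $ 0 else 0)" for d
    unfolding ginvE_def g00 by (simp add: neg_inv)
  have "christoffel m p 0 b c = (1/2) * (1 / schw_metric m p $ 0 $ 0) *
      (pdiff (\<lambda>x. schw_metric m x $ 0 $ c) b p + pdiff (\<lambda>x. schw_metric m x $ 0 $ b) c p
       - pdiff (\<lambda>x. schw_metric m x $ b $ c) 0 p)"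
    unfolding christoffel_def minv[OF assms] gi sum4 by (simp add: d4')
  also have "\<dots> = ((if b = 0 then pdiff (\<lambda>x. schw_metric m x $ 0 $ 0) c p else 0) +
      (if c = 0 then pdiff (\<lambda>x. schw_metric m x $ 0 $ 0) b p else 0)) / (2 * schw_metric m p $ 0 $ 0)"
    by (cases "b = 0"; cases "c = 0"; simp add: pdiff_t pdiff_0c)
  finally show ?thesis .
qed

lemma chr0_sum:
  assumes "srad p > 2*m" "m > 0"
  shows "(\<Sum>b\<in>UNIV. \<Sum>c\<in>UNIV. christoffel m p 0 b c * Y $ b * Z $ c) =
    (Y $ 0 * (\<Sum>c\<in>UNIV. pdiff (\<lambda>x. schw_metric m x $ 0 $ 0) c p * Z $ c) +
     Z $ 0 * (\<Sum>c\<in>UNIV. pdiff (\<lambda>x. schw_metric m x $ 0 $ 0) c p * Y $ c)) / (2 * schw_metric m p $ 0 $ 0)"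
proof -
  let ?P = "\<lambda>c. pdiff (\<lambda>x. schw_metric m x $ 0 $ 0) c p"
  have "(\<Sum>b\<in>UNIV. \<Sum>c\<in>UNIV. christoffel m p 0 b c * Y $ b * Z $ c) =
     (\<Sum>b\<in>UNIV. \<Sum>c\<in>UNIV. ((if b = 0 then ?P c else 0) + (if c = 0 then ?P b else 0)) * Y $ b * Z $ c)
      / (2 * schw_metric m p $ 0 $ 0)"
    unfolding chr0[OF assms] sum_divide_distrib by simp
  also have "(\<Sum>b\<in>UNIV. \<Sum>c\<in>UNIV. ((if b = 0 then ?P c else 0) + (if c = 0 then ?P b else 0)) * Y $ b * Z $ c)
     = Y $ 0 * (\<Sum>c\<in>UNIV. ?P c * Z $ c) + Z $ 0 * (\<Sum>c\<in>UNIV. ?P c * Y $ c)"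
    unfolding sum4 by (simp add: d4 d4' pdiff_t algebra_simps)
  finally show ?thesis .
qed


lemma const01:
  fixes f :: "real \<Rightarrow> real"
  assumes "\<And>s. s \<in> {0..1} \<Longrightarrow> (f has_real_derivative 0) (at s within {0..1})"
  shows "\<forall>s\<in>{0..1}. f s = f 0"
proof -
  have e: "((*) (0::real)) = (\<lambda>h. 0)" by auto
  have "\<And>s. s \<in> {0..1} \<Longrightarrow> (f has_derivative (\<lambda>h. 0)) (at s within {0..1})"
    using assms by (simp only: has_field_derivative_def e)
  then obtain c where "\<forall>x\<in>{0..1::real}. f x = c"
    using has_derivative_zero_constant[of "{0..1::real}" f] by auto
  then show ?thesis by auto
qed

lemma G_deriv:
  assumes m: "m > 0" and ext: "srad (\<psi> s) > 2*m"
    and X: "(\<psi> has_vector_derivative X s) (at s within {0..1})"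
  shows "((\<lambda>s. schw_metric m (\<psi> s) $ 0 $ 0) has_real_derivative
        (\<Sum>c\<in>UNIV. pdiff (\<lambda>x. schw_metric m x $ 0 $ 0) c (\<psi> s) * X s $ c)) (at s within {0..1})"
  using chain_pdiff[OF metric_differentiable[OF ext m] X] .

lemma t_const:
  assumes m: "m > 0" and ext: "\<forall>s\<in>{0..1}. srad (\<psi> s) > 2*m"
    and X: "\<forall>s\<in>{0..1}. (\<psi> has_vector_derivative X s) (at s within {0..1})"
    and X2: "\<forall>s\<in>{0..1}. (X has_vector_derivative X2 s) (at s within {0..1})"
    and geo: "\<forall>s\<in>{0..1}. \<forall>a. X2 s $ a + (\<Sum>b\<in>UNIV. \<Sum>c\<in>UNIV. christoffel m (\<psi> s) a b c * X s $ b * X s $ c) = 0"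
    and init: "X 0 $ 0 = 0"
  shows "\<forall>s\<in>{0..1}. X s $ 0 = 0"
proof -
  define G where "G s = schw_metric m (\<psi> s) $ 0 $ 0" for s
  define P where "P s = (\<Sum>c\<in>UNIV. pdiff (\<lambda>x. schw_metric m x $ 0 $ 0) c (\<psi> s) * X s $ c)" for s
  have "\<forall>s\<in>{0..1}. X s $ 0 * G s = X 0 $ 0 * G 0"
  proof (rule const01)
    fix s :: real assume s: "s \<in> {0..1}"
    have es0: "srad (\<psi> s) > 2*m" using ext s by blast
    have Xs0: "(\<psi> has_vector_derivative X s) (at s within {0..1})" using X s by blast
    have Gn: "G s \<noteq> 0" using g00_ne[OF es0 m] unfolding G_def by simp
    have dG: "(G has_real_derivative P s) (at s within {0..1})"
      unfolding G_def P_def by (rule G_deriv[of m \<psi> s X, OF m es0 Xs0])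
    have dw: "((\<lambda>s. X s $ 0) has_real_derivative X2 s $ 0) (at s within {0..1})"
    proof -
      have "(X has_vector_derivative X2 s) (at s within {0..1})" using X2 s by blast
      then show ?thesis by (rule comp_deriv)
    qed
    have "X2 s $ 0 = - (\<Sum>b\<in>UNIV. \<Sum>c\<in>UNIV. christoffel m (\<psi> s) 0 b c * X s $ b * X s $ c)"
    proof -
      have "\<forall>a. X2 s $ a + (\<Sum>b\<in>UNIV. \<Sum>c\<in>UNIV. christoffel m (\<psi> s) a b c * X s $ b * X s $ c) = 0"
        using geo s by blast
      then show ?thesis by (simp add: eq_neg_iff_add_eq_0)
    qed
    also have "\<dots> = - (X s $ 0 * P s + X s $ 0 * P s) / (2 * G s)"
    proof -
      show ?thesis unfolding chr0_sum[OF es0 m] P_def G_def by simp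
    qed
    finally have w': "X2 s $ 0 = - (X s $ 0 * P s) / G s" using Gn by (simp add: field_simps)
    have "((\<lambda>s. X s $ 0 * G s) has_real_derivative X2 s $ 0 * G s + P s * X s $ 0) (at s within {0..1})"
      by (rule DERIV_mult[OF dw dG])
    moreover have "X2 s $ 0 * G s + P s * X s $ 0 = 0" unfolding w' using Gn by (simp add: field_simps)
    ultimately show "((\<lambda>s. X s $ 0 * G s) has_real_derivative 0) (at s within {0..1})" by simp
  qed
  then show ?thesis
  proof (intro ballI)
    fix s :: real assume s: "s \<in> {0..1}" and H: "\<forall>s\<in>{0..1}. X s $ 0 * G s = X 0 $ 0 * G 0"
    have es0: "srad (\<psi> s) > 2*m" using ext s by blast
    have Xs0: "(\<psi> has_vector_derivative X s) (at s within {0..1})" using X s by blast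
    have Gn: "G s \<noteq> 0" using g00_ne[OF es0 m] unfolding G_def by simp
    have "X s $ 0 * G s = 0" using H s init by simp
    then show "X s $ 0 = 0" using Gn by simp
  qed
qed

lemma V0_const:
  assumes m: "m > 0" and ext: "\<forall>s\<in>{0..1}. srad (\<psi> s) > 2*m"
    and X: "\<forall>s\<in>{0..1}. (\<psi> has_vector_derivative X s) (at s within {0..1})"
    and t0: "\<forall>s\<in>{0..1}. X s $ 0 = 0"
    and par: "parallel_along m \<psi> V"
  shows "(V 0 $ 0)^2 * schw_metric m (\<psi> 0) $ 0 $ 0 = (V 1 $ 0)^2 * schw_metric m (\<psi> 1) $ 0 $ 0"
proof -
  obtain V' where hV: "\<forall>s\<in>{0..1}. (V has_vector_derivative V' s) (at s within {0..1}) \<and>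
        (\<forall>a. V' s $ a + (\<Sum>b\<in>UNIV. \<Sum>c\<in>UNIV. christoffel m (\<psi> s) a b c *
              vector_derivative \<psi> (at s within {0..1}) $ b * V s $ c) = 0)"
    using par unfolding parallel_along_def by blast
  define G where "G s = schw_metric m (\<psi> s) $ 0 $ 0" for s
  define P where "P s = (\<Sum>c\<in>UNIV. pdiff (\<lambda>x. schw_metric m x $ 0 $ 0) c (\<psi> s) * X s $ c)" for s
  have "\<forall>s\<in>{0..1}. (V s $ 0)^2 * G s = (V 0 $ 0)^2 * G 0"
  proof (rule const01)
    fix s :: real assume s: "s \<in> {0..1}"
    have es0: "srad (\<psi> s) > 2*m" using ext s by blast
    have Xs0: "(\<psi> has_vector_derivative X s) (at s within {0..1})" using X s by blast
    have Gn: "G s \<noteq> 0" using g00_ne[OF es0 m] unfolding G_def by simp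
    have vd: "vector_derivative \<psi> (at s within {0..1}) = X s"
      by (rule vector_derivative_within_closed_interval[OF _ s Xs0]) simp
    have dG: "(G has_real_derivative P s) (at s within {0..1})"
      unfolding G_def P_def by (rule G_deriv[of m \<psi> s X, OF m es0 Xs0])
    have dv: "((\<lambda>s. V s $ 0) has_real_derivative V' s $ 0) (at s within {0..1})"
    proof -
      have "(V has_vector_derivative V' s) (at s within {0..1})" using hV s by blast
      then show ?thesis by (rule comp_deriv)
    qed
    have h1: "\<forall>a. V' s $ a + (\<Sum>b\<in>UNIV. \<Sum>c\<in>UNIV. christoffel m (\<psi> s) a b c *
              vector_derivative \<psi> (at s within {0..1}) $ b * V s $ c) = 0" using hV s by blast
    have "V' s $ 0 = - (\<Sum>b\<in>UNIV. \<Sum>c\<in>UNIV. christoffel m (\<psi> s) 0 b c * X s $ b * V s $ c)"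
      using h1[rule_format, of 0] unfolding vd by (simp add: eq_neg_iff_add_eq_0)
    also have "\<dots> = - (V s $ 0 * P s) / (2 * G s)"
    proof -
      have x0: "X s $ 0 = 0" using t0 s by blast
      show ?thesis unfolding chr0_sum[OF es0 m] P_def G_def x0 by simp
    qed
    finally have v': "V' s $ 0 = - (V s $ 0 * P s) / (2 * G s)" .
    have "((\<lambda>s. (V s $ 0)^2 * G s) has_real_derivative
        (2 * V s $ 0 * V' s $ 0) * G s + P s * (V s $ 0)^2) (at s within {0..1})"
      by (rule DERIV_mult[OF _ dG]) (rule DERIV_cong[OF DERIV_power[OF dv, of 2]], simp)
    moreover have "(2 * V s $ 0 * V' s $ 0) * G s + P s * (V s $ 0)^2 = 0"
      unfolding v' using Gn by (simp add: field_simps power2_eq_square)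
    ultimately show "((\<lambda>s. (V s $ 0)^2 * G s) has_real_derivative 0) (at s within {0..1})" by simp
  qed
  moreover have "(1::real) \<in> {0..1}" by simp
  ultimately have "(V 1 $ 0)^2 * G 1 = (V 0 $ 0)^2 * G 0" by (rule bspec)
  then show ?thesis unfolding G_def by (rule sym)
qed



lemma vec4_nth: "vec4 a b c d $ 0 = a" "vec4 a b c d $ 1 = b" "vec4 a b c d $ 2 = c" "vec4 a b c d $ 3 = d"
  unfolding vec4_def by (simp_all add: d4')

lemma sph_nth: "sph y $ 0 = y $ 0" "sph y $ 1 = y$1 * sin (y$2) * cos (y$3)"
   "sph y $ 2 = y$1 * sin (y$2) * sin (y$3)" "sph y $ 3 = y$1 * cos (y$2)"
  unfolding sph_def by (simp_all add: d4')

lemma srad_sph: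
  assumes "r > 0"
  shows "srad (sph (vec4 t r th ph)) = r"
proof -
  have "(r * sin th * cos ph)^2 + (r * sin th * sin ph)^2 + (r * cos th)^2 = r^2"
    using sin_cos_squared_add[of th] sin_cos_squared_add[of ph] by algebra
  then show ?thesis unfolding srad_def sph_nth vec4_nth using assms by simp
qed

lemma sph_push_t:
  "sph_push (vec4 t r th ph) (vec4 c 0 0 0) = vec4 c 0 0 0"
proof -
  have eq: "(\<lambda>s. sph (vec4 t r th ph + s *\<^sub>R vec4 c 0 0 0)) = (\<lambda>s. sph (vec4 t r th ph) + s *\<^sub>R vec4 c 0 0 0)"
  proof
    fix s
    show "sph (vec4 t r th ph + s *\<^sub>R vec4 c 0 0 0) = sph (vec4 t r th ph) + s *\<^sub>R vec4 c 0 0 0"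
      unfolding vec_eq_iff forall4 by (simp add: sph_nth vec4_nth)
  qed
  have "((\<lambda>s. sph (vec4 t r th ph) + s *\<^sub>R vec4 c 0 0 0) has_vector_derivative vec4 c 0 0 0) (at 0)"
    by (auto intro!: derivative_eq_intros)
  then show ?thesis unfolding sph_push_def eq by (rule vector_derivative_at)
qed

lemma sph_push_orb:
  "sph_push (vec4 t r (pi/2) ph) (vec4 a 0 0 b) =
     vec4 a (- r * sin ph * b) (r * cos ph * b) 0"
proof -
  let ?f = "\<lambda>s. (t + s * a) *\<^sub>R axis 0 1 + (r * cos (ph + s * b)) *\<^sub>R axis 1 1
      + (r * sin (ph + s * b)) *\<^sub>R (axis 2 1 :: real^4)"
  have eq: "(\<lambda>s. sph (vec4 t r (pi/2) ph + s *\<^sub>R vec4 a 0 0 b)) = ?f"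
  proof
    fix s
    show "sph (vec4 t r (pi/2) ph + s *\<^sub>R vec4 a 0 0 b) = ?f s"
      unfolding vec_eq_iff forall4 by (simp add: sph_nth vec4_nth axis_def d4 d4')
  qed
  have "(?f has_vector_derivative (a *\<^sub>R axis 0 1 + (- r * sin ph * b) *\<^sub>R axis 1 1
      + (r * cos ph * b) *\<^sub>R (axis 2 1 :: real^4))) (at 0)"
    by (auto intro!: derivative_eq_intros simp: algebra_simps)
  moreover have "a *\<^sub>R axis 0 1 + (- r * sin ph * b) *\<^sub>R axis 1 1
      + (r * cos ph * b) *\<^sub>R (axis 2 1 :: real^4) = vec4 a (- r * sin ph * b) (r * cos ph * b) 0"
    unfolding vec_eq_iff forall4 by (simp add: vec4_nth axis_def d4 d4')
  ultimately show ?thesis unfolding sph_push_def eq by (simp add: vector_derivative_at)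
qed



lemma sg_sym: "sg m p x y = sg m p y x"
  unfolding sg_expand by (subst sum.swap) (simp add: gsym mult.commute mult.left_commute)

lemma sg_quad: "sg m p (a *\<^sub>R x - y) (a *\<^sub>R x - y) = a^2 * sg m p x x - 2*a * sg m p x y + sg m p y y"
proof -
  have "sg m p (a *\<^sub>R x - y) (a *\<^sub>R x - y) = a^2 * sg m p x x - a * sg m p x y - a * sg m p y x + sg m p y y"
    unfolding sg_expand sum4 by (simp add: algebra_simps power2_eq_square)
  then show ?thesis using sg_sym[of m p y x] by simp
qed

lemma g_a0: "a \<noteq> 0 \<Longrightarrow> schw_metric m p $ a $ 0 = 0"
  unfolding schw_metric_def by simp

lemma sg_U: "sg m p x (vec4 c 0 0 0) = x $ 0 * schw_metric m p $ 0 $ 0 * c"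
  unfolding sg_expand sum4 by (simp add: vec4_nth g_a0 d4')

lemma sg_orb:
  assumes "srad p = r" "p $ 3 = 0" "v $ 3 = 0" "p$1 * v$1 + p$2 * v$2 = 0"
  shows "sg m p v v = - (1 - 2*m/r) * (v$0)^2 + (v$1)^2 + (v$2)^2"
proof -
  let ?k = "2 * m / (srad p - 2 * m) / (srad p)^2"
  have "sg m p v v = - (1 - 2*m/r) * (v$0)^2 + (v$1)^2 + (v$2)^2 + ?k * (p$1 * v$1 + p$2 * v$2)^2"
    unfolding sg_expand sum4 schw_metric_def using assms(1-3)
    by (simp add: d4 d4' algebra_simps power2_eq_square)
  then show ?thesis using assms(4) by simp
qed


theorem mainTheorem4:
  fixes m r1 r0 th0 ph0 t0 ph1 t1 :: real
    and \<psi> V :: "real \<Rightarrow> real^4"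
  assumes "m > 0" and "r1 > 3*m"
    and "r0 > 2*m" and "0 < th0" and "th0 < pi"
    and "geodesic_segment m \<psi>"
    and "\<psi> 0 = obs_event t0 r0 th0 ph0"
    and "\<psi> 1 = orb_event m r1 ph1 t1"
    and "sg m (\<psi> 0) (vector_derivative \<psi> (at 0 within {0..1}))
                   (vector_derivative \<psi> (at 0 within {0..1})) > 0"
    and "sg m (\<psi> 0) (vector_derivative \<psi> (at 0 within {0..1})) (obs_vel m t0 r0 th0 ph0) = 0"
    and "parallel_along m \<psi> V"
    and "V 1 = orb_vel m r1 ph1 t1"
  shows "sg m (\<psi> 0) (vkin m (\<psi> 0) (obs_vel m t0 r0 th0 ph0) (V 0))
                    (vkin m (\<psi> 0) (obs_vel m t0 r0 th0 ph0) (V 0)) = m / (r1 - 2*m)"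
proof -
  note m = assms(1)
  obtain X X2 where geo: "\<forall>s\<in>{0..1}. (\<psi> has_vector_derivative X s) (at s within {0..1}) \<and>
        (X has_vector_derivative X2 s) (at s within {0..1}) \<and>
        (\<forall>a. X2 s $ a + (\<Sum>b\<in>UNIV. \<Sum>c\<in>UNIV. christoffel m (\<psi> s) a b c * X s $ b * X s $ c) = 0)"
    and ext0: "\<forall>s\<in>{0..1}. \<psi> s \<in> schw_exterior m"
    using assms(6) unfolding geodesic_segment_def by blast
  have ext: "\<forall>s\<in>{0..1}. srad (\<psi> s) > 2*m" using ext0 unfolding schw_exterior_def by blast
  have hX: "\<forall>s\<in>{0..1}. (\<psi> has_vector_derivative X s) (at s within {0..1})" using geo by blast
  have hX2: "\<forall>s\<in>{0..1}. (X has_vector_derivative X2 s) (at s within {0..1})" using geo by blast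
  have hgeo: "\<forall>s\<in>{0..1}. \<forall>a. X2 s $ a + (\<Sum>b\<in>UNIV. \<Sum>c\<in>UNIV. christoffel m (\<psi> s) a b c * X s $ b * X s $ c) = 0"
    using geo by blast
  have X0: "(\<psi> has_vector_derivative X 0) (at 0 within {0..1})" using hX by simp
  have vd0: "vector_derivative \<psi> (at 0 within {0..1}) = X 0"
    by (rule vector_derivative_within_closed_interval[OF _ _ X0]) simp_all
  define N0 where "N0 = 1 - 2*m/r0"
  have r0p: "r0 > 0" using assms(1,3) by simp
  have N0p: "N0 > 0" unfolding N0_def using assms(1,3) r0p by (simp add: field_simps)
  have U: "obs_vel m t0 r0 th0 ph0 = vec4 (1 / sqrt N0) 0 0 0"
    unfolding obs_vel_def N0_def by (rule sph_push_t)
  have s0: "srad (\<psi> 0) = r0" unfolding assms(7) obs_event_def using r0p by (rule srad_sph)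
  have g0: "schw_metric m (\<psi> 0) $ 0 $ 0 = - N0" unfolding g00 s0 N0_def by simp
  have "X 0 $ 0 * (- N0) * (1 / sqrt N0) = 0"
    using assms(10) unfolding vd0 U sg_U g0 .
  then have X00: "X 0 $ 0 = 0" using N0p by simp
  have tc: "\<forall>s\<in>{0..1}. X s $ 0 = 0"
    by (rule t_const[OF m ext hX hX2 hgeo X00])
  have V0c: "(V 0 $ 0)^2 * schw_metric m (\<psi> 0) $ 0 $ 0 = (V 1 $ 0)^2 * schw_metric m (\<psi> 1) $ 0 $ 0"
    by (rule V0_const[OF m ext hX tc assms(11)])
  have cons: "sg m (\<psi> 0) (V 0) (V 0) = sg m (\<psi> 1) (V 1) (V 1)"
    by (rule conserved[OF m ext hX assms(11)])
  define ut where "ut = orb_ut m r1"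
  define uphi where "uphi = orb_uphi m r1"
  define ph where "ph = ph1 + uphi / ut * t1"
  have r1p: "r1 > 0" "r1 - 3*m > 0" "r1 - 2*m > 0" using assms(1,2) by simp_all
  have ut2: "ut^2 = r1 / (r1 - 3*m)" unfolding ut_def orb_ut_def using r1p by simp
  have uphi2: "uphi^2 = m / (r1 - 3*m) / r1^2" unfolding uphi_def orb_uphi_def using r1p m
    by (simp add: power_mult_distrib power_divide)
  have p1: "\<psi> 1 = sph (vec4 t1 r1 (pi/2) ph)" unfolding assms(8) orb_event_def ph_def ut_def uphi_def ..
  have V1: "V 1 = vec4 ut (- r1 * sin ph * uphi) (r1 * cos ph * uphi) 0"
    unfolding assms(12) orb_vel_def ph_def ut_def uphi_def by (rule sph_push_orb)
  have s1: "srad (\<psi> 1) = r1" unfolding p1 using r1p(1) by (rule srad_sph)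
  have g1: "schw_metric m (\<psi> 1) $ 0 $ 0 = - (1 - 2*m/r1)" unfolding g00 s1 ..
  have sV1: "sg m (\<psi> 1) (V 1) (V 1) = -1"
  proof -
    have "sg m (\<psi> 1) (V 1) (V 1) = - (1 - 2*m/r1) * ut^2 + (r1 * sin ph * uphi)^2 + (r1 * cos ph * uphi)^2"
      using sg_orb[OF s1, of "V 1" m] unfolding p1 V1 by (simp add: sph_nth vec4_nth algebra_simps)
    also have "\<dots> = - (1 - 2*m/r1) * ut^2 + r1^2 * uphi^2"
      using sin_cos_squared_add[of ph] by algebra
    also have "\<dots> = -1"
    proof -
      have e1: "(1 - 2*m/r1) * (r1 / (r1 - 3*m)) = (r1 - 2*m) / (r1 - 3*m)" using r1p by (simp add: field_simps)
      have e2: "r1^2 * (m / (r1 - 3*m) / r1^2) = m / (r1 - 3*m)" using r1p by simp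
      have e3: "- ((r1 - 2*m) / (r1 - 3*m)) + m / (r1 - 3*m) = -1"
      proof -
        have "- ((r1 - 2*m) / (r1 - 3*m)) + m / (r1 - 3*m) = (m - (r1 - 2*m)) / (r1 - 3*m)"
          by (simp add: diff_divide_distrib)
        also have "m - (r1 - 2*m) = - (r1 - 3*m)" by simp
        also have "- (r1 - 3*m) / (r1 - 3*m) = -1"
        proof -
          have nz: "r1 - 3*m \<noteq> 0" using r1p by simp
          show ?thesis by (simp only: divide_minus_left divide_self[OF nz])
        qed
        finally show ?thesis .
      qed
      show ?thesis unfolding ut2 uphi2 mult_minus_left e1 e2 by (rule e3)
    qed
    finally show ?thesis .
  qed
  have A: "sg m (\<psi> 0) (V 0) (V 0) = -1" using cons sV1 by simp
  define gam where "gam = V 0 $ 0 * sqrt N0"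
  have B: "sg m (\<psi> 0) (V 0) (obs_vel m t0 r0 th0 ph0) = - gam"
    unfolding U sg_U g0 gam_def using N0p by (simp add: field_simps real_sqrt_mult[symmetric] )
  have C: "sg m (\<psi> 0) (obs_vel m t0 r0 th0 ph0) (obs_vel m t0 r0 th0 ph0) = -1"
    unfolding U sg_U g0 vec4_nth using N0p by (simp add: field_simps)
  have gam2: "gam^2 = (r1 - 2*m) / (r1 - 3*m)"
  proof -
    have "gam^2 = (V 0 $ 0)^2 * N0" unfolding gam_def using N0p by (simp add: power_mult_distrib)
    also have "\<dots> = (V 1 $ 0)^2 * (1 - 2*m/r1)" using V0c unfolding g0 g1 by (simp add: algebra_simps)
    also have "\<dots> = ut^2 * (1 - 2*m/r1)" unfolding V1 vec4_nth ..
    also have "\<dots> = (r1 - 2*m) / (r1 - 3*m)" unfolding ut2 using r1p by (simp add: field_simps)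
    finally show ?thesis .
  qed
  have gnz: "gam \<noteq> 0" using gam2 r1p by auto
  have "sg m (\<psi> 0) (vkin m (\<psi> 0) (obs_vel m t0 r0 th0 ph0) (V 0))
                    (vkin m (\<psi> 0) (obs_vel m t0 r0 th0 ph0) (V 0))
      = (1/gam)^2 * (-1) - 2 * (1/gam) * (- gam) + (-1)"
    unfolding vkin_def B sg_quad A C by simp
  also have "\<dots> = 1 - 1 / gam^2" using gnz by (simp add: field_simps power2_eq_square)
  also have "\<dots> = m / (r1 - 2*m)" unfolding gam2 using r1p by (simp add: field_simps)
  finally show ?thesis .
qed

end
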